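(* Let $p\ge 1$, let $g_2,g_4,\dots,g_{2p}$ be real numbers with $g_{2p}>0$, let $Q(x)=\sum_{j=1}^{p} g_{2j}x^{2j}$ and let $N>0$. Let $P_n(x)=x^n+\cdots$ ($n\ge 0$) be the monic orthogonal polynomials with respect to the weight $e^{-NQ(x)}$ on $\mathbb{R}$, i.e. $\int_{-\infty}^{\infty}P_k(x)P_l(x)e^{-NQ(x)}\,dx=\delta_{kl}h_k$ with $h_k>0$, and set $P_{-1}=0$. They satisfy $xP_n(x)=P_{n+1}(x)+r_nP_{n-1}(x)$ for $n\ge 0$, with $r_0=0$. For $n\ge 1$ and $j\ge 1$ put $(L^{j})_{n,n-1}=h_{n-1}^{-1}\int_{-\infty}^{\infty}x^{j}P_n(x)P_{n-1}(x)e^{-NQ(x)}\,dx$, and define the formal power series in $\lambda^{-1}$ $$U_n(\lambda)=1+2\sum_{k\ge 1}(L^{2k-1})_{n,n-1}\lambda^{-k}\quad(n\ge 1),\qquad U_0(\lambda)=1.$$ Then for every $n\ge 1$, as formal Laurent series in $\lambda^{-1}$, $$\lambda\,(U_{n+1}-U_n)=r_{n+1}(U_{n+2}+U_{n+1})-r_n(U_n+U_{n-1})$$ and $$r_n\,(U_n+U_{n-1})(U_n+U_{n+1})=\lambda\,(U_n^2-1).$$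
   Context: The recurrence coefficients $r_n$ (depending on $N$) are those of the three-term recurrence of the monic orthogonal polynomials; because $Q$ is even, no diagonal term $s_nP_n$ appears. $(L^j)_{n,n-1}$ is the $(n,n-1)$ matrix element of the $j$-th power of the Jacobi (Lax) operator $LP_n=P_{n+1}+r_nP_{n-1}$. *)

theory Defs
  imports "HOL-Analysis.Analysis" "HOL-Computational_Algebra.Polynomial"
    "HOL-Computational_Algebra.Formal_Laurent_Series"
begin

text \<open>The even potential Q(x) = sum_{j=1}^p g_{2j} x^{2j}; here g j stands for g_{2j}.\<close>
definition Qpot :: "nat \<Rightarrow> (nat \<Rightarrow> real) \<Rightarrow> real \<Rightarrow> real" where
  "Qpot p g x = (\<Sum>j=1..p. g j * x ^ (2 * j))"

definition wt :: "real \<Rightarrow> nat \<Rightarrow> (nat \<Rightarrow> real) \<Rightarrow> real \<Rightarrow> real" where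
  "wt N p g x = exp (- N * Qpot p g x)"

definition hnorm :: "real \<Rightarrow> nat \<Rightarrow> (nat \<Rightarrow> real) \<Rightarrow> (nat \<Rightarrow> real poly) \<Rightarrow> nat \<Rightarrow> real" where
  "hnorm N p g P k = (\<integral>x. poly (P k) x * poly (P k) x * wt N p g x \<partial>lborel)"

definition Lsub :: "real \<Rightarrow> nat \<Rightarrow> (nat \<Rightarrow> real) \<Rightarrow> (nat \<Rightarrow> real poly) \<Rightarrow> nat \<Rightarrow> nat \<Rightarrow> real" where
  "Lsub N p g P j n =
     (\<integral>x. x ^ j * poly (P n) x * poly (P (n - 1)) x * wt N p g x \<partial>lborel) / hnorm N p g P (n - 1)"

text \<open>U_n as a formal power series in the variable X = lambda^{-1}.\<close>
definition Ufps :: "real \<Rightarrow> nat \<Rightarrow> (nat \<Rightarrow> real) \<Rightarrow> (nat \<Rightarrow> real poly) \<Rightarrow> nat \<Rightarrow> real fps" where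
  "Ufps N p g P n =
     (if n = 0 then 1
      else Abs_fps (\<lambda>k. if k = 0 then 1 else 2 * Lsub N p g P (2 * k - 1) n))"

definition U :: "real \<Rightarrow> nat \<Rightarrow> (nat \<Rightarrow> real) \<Rightarrow> (nat \<Rightarrow> real poly) \<Rightarrow> nat \<Rightarrow> real fls" where
  "U N p g P n = fps_to_fls (Ufps N p g P n)"

abbreviation lam :: "real fls" where
  "lam \<equiv> fls_X_inv"

end

theory Submission
  imports Defs
begin
locale ops =
  fixes N :: real and p :: nat and g :: "nat \<Rightarrow> real" and P :: "nat \<Rightarrow> real poly" and r :: "nat \<Rightarrow> real"
  assumes monic: "\<And>k. degree (P k) = k \<and> lead_coeff (P k) = 1"
    and orth: "\<And>k l. k \<noteq> l \<Longrightarrow>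
        (\<integral>x. poly (P k) x * poly (P l) x * wt N p g x \<partial>lborel) = 0"
    and hpos: "\<And>k. hnorm N p g P k > 0"
    and rec: "\<And>m. [:0, 1:] * P m = P (Suc m) + smult (r m) (if m = 0 then 0 else P (m - 1))"
    and r0: "r 0 = 0"
begin

abbreviation w where "w \<equiv> wt N p g"

lemma w_pos: "w x > 0" by (simp add: wt_def)

lemma meas: "(\<lambda>x. poly q x * w x) \<in> borel_measurable lborel"
  unfolding wt_def Qpot_def measurable_lborel2
  by (intro borel_measurable_continuous_onI continuous_intros)

lemma int_sq: "integrable lborel (\<lambda>x. poly (P k) x * poly (P k) x * w x)"
  using hpos[of k] not_integrable_integral_eq unfolding hnorm_def by fastforce

lemma int_prod: "integrable lborel (\<lambda>x. poly (P a * P b) x * w x)"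
proof (rule Bochner_Integration.integrable_bound)
  show "integrable lborel (\<lambda>x. poly (P a) x * poly (P a) x * w x + poly (P b) x * poly (P b) x * w x)"
    using int_sq by (intro Bochner_Integration.integrable_add)
  show "(\<lambda>x. poly (P a * P b) x * w x) \<in> borel_measurable lborel" by (rule meas)
  show "AE x in lborel. norm (poly (P a * P b) x * w x)
      \<le> norm (poly (P a) x * poly (P a) x * w x + poly (P b) x * poly (P b) x * w x)"
  proof (rule AE_I2)
    fix x
    define u where "u = poly (P a) x"
    define v where "v = poly (P b) x"
    have wp: "w x > 0" by (rule w_pos)
    have sq: "(\<bar>u\<bar> - \<bar>v\<bar>) * (\<bar>u\<bar> - \<bar>v\<bar>) = u * u + v * v - 2 * (\<bar>u\<bar> * \<bar>v\<bar>)"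
      by (simp add: algebra_simps abs_mult_self_eq)
    have "0 \<le> (\<bar>u\<bar> - \<bar>v\<bar>) * (\<bar>u\<bar> - \<bar>v\<bar>)" by simp
    moreover have "0 \<le> \<bar>u\<bar> * \<bar>v\<bar>" by simp
    moreover have "\<bar>u * v\<bar> = \<bar>u\<bar> * \<bar>v\<bar>" by (rule abs_mult)
    ultimately have "\<bar>u * v\<bar> \<le> u * u + v * v" using sq by linarith
    hence "\<bar>u * v\<bar> * w x \<le> (u * u + v * v) * w x" using wp by (intro mult_right_mono) auto
    moreover have "0 \<le> (u * u + v * v) * w x" using wp by simp
    ultimately show "norm (poly (P a * P b) x * w x)
      \<le> norm (poly (P a) x * poly (P a) x * w x + poly (P b) x * poly (P b) x * w x)"
      using wp by (simp add: u_def[symmetric] v_def[symmetric] abs_mult distrib_right)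
  qed
qed

lemma P0: "P 0 = 1"
proof -
  have "degree (P 0) = 0" "lead_coeff (P 0) = 1" using monic[of 0] by auto
  thus ?thesis by (metis degree_0_id one_pCons)
qed

lemma Pnz: "P k \<noteq> 0" using monic[of k] by auto

lemma int_poly_le: "degree q \<le> d \<Longrightarrow> integrable lborel (\<lambda>x. poly q x * w x)"
proof (induction d arbitrary: q)
  case 0
  define c where "c = coeff q 0"
  have "q = [:c:]" using degree_0_id[of q] 0 by (simp add: c_def)
  hence q: "q = smult c (P 0 * P 0)" by (simp add: P0)
  have "integrable lborel (\<lambda>x. c * (poly (P 0 * P 0) x * w x))"
    using int_prod by (intro integrable_mult_right)
  thus ?case by (simp add: q mult.assoc)
next
  case (Suc d)
  define c where "c = coeff q (Suc d)"
  define a where "a = Suc d - Suc d div 2"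
  define b where "b = Suc d div 2"
  have ab: "a + b = Suc d" unfolding a_def b_def by simp
  have dab: "degree (P a * P b) = Suc d" using ab by (simp add: degree_mult_eq Pnz monic)
  have cab: "coeff (P a * P b) (Suc d) = 1"
    by (metis dab lead_coeff_mult monic mult_1)
  define q' where "q' = q - smult c (P a * P b)"
  have "degree q' \<le> d"
  proof (rule degree_le, intro allI impI)
    fix i assume "d < i"
    show "coeff q' i = 0"
    proof (cases "i = Suc d")
      case True thus ?thesis by (simp add: q'_def c_def cab)
    next
      case False
      hence "i > Suc d" using \<open>d < i\<close> by simp
      thus ?thesis using Suc.prems dab by (simp add: q'_def coeff_eq_0)
    qed
  qed
  hence i1: "integrable lborel (\<lambda>x. poly q' x * w x)" by (rule Suc.IH)
  have i2: "integrable lborel (\<lambda>x. c * (poly (P a * P b) x * w x))"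
    using int_prod by (intro integrable_mult_right)
  have "integrable lborel (\<lambda>x. poly q' x * w x + c * (poly (P a * P b) x * w x))"
    using i1 i2 by (rule Bochner_Integration.integrable_add)
  moreover have "q = q' + smult c (P a * P b)" by (simp add: q'_def)
  ultimately show ?case by (simp add: algebra_simps)
qed

lemma int_poly: "integrable lborel (\<lambda>x. poly q x * w x)"
  using int_poly_le by blast

definition phi :: "real poly \<Rightarrow> real" where
  "phi q = (\<integral>x. poly q x * w x \<partial>lborel)"

lemma phi_add: "phi (a + b) = phi a + phi b"
  unfolding phi_def using int_poly[of a] int_poly[of b]
  by (simp add: distrib_right)

lemma phi_smult: "phi (smult c a) = c * phi a"
  unfolding phi_def by (simp add: mult.assoc)

definition D where "D j a b = phi (monom 1 j * P a * P b)"
definition h where "h k = hnorm N p g P k"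

lemma h_D: "h k = D 0 k k"
  unfolding h_def D_def hnorm_def phi_def by (simp add: mult.assoc)

lemma h_pos: "h k > 0" using hpos by (simp add: h_def)

lemma orthD: "a \<noteq> b \<Longrightarrow> D 0 a b = 0"
  unfolding D_def phi_def using orth by (simp add: mult.assoc)

lemma Dsym: "D j a b = D j b a"
  unfolding D_def by (simp add: mult_ac)

lemma recu: "[:0, 1:] * P m = P (Suc m) + smult (r m) (P (m - 1))"
  using rec[of m] r0 by (cases m) auto

lemma DX: "D (Suc j) a b = D j (Suc a) b + r a * D j (a - 1) b"
proof -
  have m: "monom (1::real) (Suc j) = [:0,1:] * monom 1 j" by (simp add: monom_Suc)
  have "monom 1 (Suc j) * P a * P b = monom 1 j * ([:0,1:] * P a) * P b"
    by (simp only: m mult_ac)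
  also have "\<dots> = monom 1 j * (P (Suc a) + smult (r a) (P (a - 1))) * P b"
    by (simp only: recu)
  also have "\<dots> = monom 1 j * P (Suc a) * P b + smult (r a) (monom 1 j * P (a - 1) * P b)"
    by (simp add: algebra_simps)
  finally show ?thesis unfolding D_def by (simp add: phi_add phi_smult)
qed

lemma h_Suc: "h (Suc n) = r (Suc n) * h n"
proof -
  have "D 1 (Suc n) n = r (Suc n) * h n"
    using DX[of 0 "Suc n" n] orthD[of "Suc (Suc n)" n] by (simp add: h_D)
  moreover have "D 1 (Suc n) n = h (Suc n)"
    using DX[of 0 n "Suc n"] orthD[of "n - 1" "Suc n"] Dsym[of 1 "Suc n" n] by (simp add: h_D)
  ultimately show ?thesis by simp
qed

lemma r_pos: "r (Suc n) > 0"
  using h_Suc[of n] h_pos[of n] h_pos[of "Suc n"] by (metis zero_less_mult_pos2)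

definition E where "E j n = (if n = 0 then 0 else D j n (n - 1) / h (n - 1))"
definition Md where "Md j n = D j n n / h n"

lemma E1: "E 1 n = r n"
proof (cases n)
  case 0 thus ?thesis by (simp add: E_def r0)
next
  case (Suc m)
  have "D 1 (Suc m) m = r (Suc m) * h m"
    using DX[of 0 "Suc m" m] orthD[of "Suc (Suc m)" m] by (simp add: h_D)
  thus ?thesis using Suc h_pos[of m] by (simp add: E_def)
qed

lemma P1: "E (Suc j) (Suc n) - E (Suc j) n = r (Suc n) * Md j (Suc n) - r n * Md j (n - 1)"
proof (cases n)
  case 0
  have "D (Suc j) 1 0 = D j 1 1" using DX[of j 0 1] Dsym[of "Suc j" 1 0] r0 by simp
  thus ?thesis using 0 h_Suc[of 0] h_pos[of 0] r0 r_pos[of 0] by (simp add: E_def Md_def)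
next
  case (Suc m)
  have e1: "D (Suc j) (Suc (Suc m)) (Suc m) = D j (Suc (Suc m)) (Suc (Suc m)) + r (Suc m) * D j m (Suc (Suc m))"
    using DX[of j "Suc m" "Suc (Suc m)"] Dsym[of "Suc j" "Suc (Suc m)" "Suc m"] by simp
  have e2: "D (Suc j) (Suc m) m = D j (Suc (Suc m)) m + r (Suc m) * D j m m"
    using DX[of j "Suc m" m] by simp
  have hs1: "h (Suc m) = r (Suc m) * h m" by (rule h_Suc)
  have hs2: "h (Suc (Suc m)) = r (Suc (Suc m)) * h (Suc m)" by (rule h_Suc)
  have pos: "h m \<noteq> 0" "r (Suc m) \<noteq> 0" "r (Suc (Suc m)) \<noteq> 0" using h_pos r_pos by (auto simp: less_imp_neq[symmetric])
  show ?thesis using Suc e1 e2 Dsym[of j m "Suc (Suc m)"]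
    by (simp add: E_def Md_def hs1 hs2 field_simps pos)
qed

lemma P2: "Md (Suc j) n = E j (Suc n) + E j n"
proof (cases n)
  case 0
  thus ?thesis using DX[of j 0 0] r0 by (simp add: E_def Md_def)
next
  case (Suc m)
  have e: "D (Suc j) (Suc m) (Suc m) = D j (Suc (Suc m)) (Suc m) + r (Suc m) * D j m (Suc m)"
    using DX[of j "Suc m" "Suc m"] by simp
  have hs1: "h (Suc m) = r (Suc m) * h m" by (rule h_Suc)
  have pos: "h m \<noteq> 0" "r (Suc m) \<noteq> 0" using h_pos r_pos by (auto simp: less_imp_neq[symmetric])
  show ?thesis using Suc e Dsym[of j m "Suc m"]
    by (simp add: E_def Md_def hs1 field_simps pos)
qed

lemma Erec: "E (j + 2) (Suc n) - E (j + 2) n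
   = r (Suc n) * (E j (n + 2) + E j (Suc n)) - r n * (E j n + E j (n - 1))"
proof -
  have "E (j + 2) (Suc n) - E (j + 2) n = r (Suc n) * Md (Suc j) (Suc n) - r n * Md (Suc j) (n - 1)"
    using P1[of "Suc j" n] by simp
  also have "\<dots> = r (Suc n) * (E j (n + 2) + E j (Suc n)) - r n * (E j n + E j (n - 1))"
    using P2[of j "Suc n"] P2[of j "n - 1"] r0 by (cases n) auto
  finally show ?thesis .
qed

lemma Lsub_E: "n \<noteq> 0 \<Longrightarrow> Lsub N p g P j n = E j n"
  unfolding Lsub_def E_def D_def phi_def h_def by (simp add: poly_monom mult.assoc)

lemma Ufps_nth: "Ufps N p g P n $ k = (if k = 0 then 1 else 2 * E (2 * k - 1) n)"
  by (cases "n = 0") (auto simp: Ufps_def Lsub_E E_def)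

lemma fps_id: "Ufps N p g P (Suc n) - Ufps N p g P n
   = fps_X * (fps_const (r (Suc n)) * (Ufps N p g P (n + 2) + Ufps N p g P (Suc n))
             - fps_const (r n) * (Ufps N p g P n + Ufps N p g P (n - 1)))"
proof (rule fps_ext)
  fix k
  show "(Ufps N p g P (Suc n) - Ufps N p g P n) $ k
     = (fps_X * (fps_const (r (Suc n)) * (Ufps N p g P (n + 2) + Ufps N p g P (Suc n))
             - fps_const (r n) * (Ufps N p g P n + Ufps N p g P (n - 1)))) $ k"
  proof (cases k)
    case 0 thus ?thesis by (simp add: Ufps_nth)
  next
    case (Suc k')
    show ?thesis
    proof (cases k')
      case 0 thus ?thesis using Suc E1[of n] E1[of "Suc n"] by (simp add: Ufps_nth algebra_simps)
    next
      case (Suc k'')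
      have a: "2 * Suc (Suc k'') - 1 = (2 * k'' + 1) + 2" by simp
      have b: "2 * Suc k'' - 1 = 2 * k'' + 1" by simp
      show ?thesis using \<open>k = Suc k'\<close> Suc Erec[of "2 * k'' + 1" n]
        by (simp only: Ufps_nth a b fps_X_mult_nth fps_mult_left_const_nth fps_add_nth fps_sub_nth)
           (simp add: algebra_simps)
    qed
  qed
qed

lemma lamX: "lam * (fls_X :: real fls) = 1"
  by (metis fls_X_inv_nonzero fls_inverse_X_inv right_inverse)

lemma id1: "lam * (U N p g P (Suc n) - U N p g P n)
           = fls_const (r (Suc n)) * (U N p g P (n + 2) + U N p g P (Suc n))
             - fls_const (r n) * (U N p g P n + U N p g P (n - 1))"
proof -
  have "U N p g P (Suc n) - U N p g P n = fps_to_fls (Ufps N p g P (Suc n) - Ufps N p g P n)"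
    by (simp add: U_def)
  also have "\<dots> = fls_X * (fls_const (r (Suc n)) * (U N p g P (n + 2) + U N p g P (Suc n))
             - fls_const (r n) * (U N p g P n + U N p g P (n - 1)))"
    by (simp only: fps_id) (simp add: fls_times_fps_to_fls U_def)
  finally show ?thesis by (simp add: mult.assoc[symmetric] lamX)
qed

lemma ring_key: fixes a b c0 c1 d e l :: "'a::comm_ring_1"
  shows "c1 * (b + a) * (b + d) - l * (b\<^sup>2 - 1)
   = (c0 * (a + e) * (a + b) - l * (a\<^sup>2 - 1)) + (a + b) * ((c1 * (d + b) - c0 * (a + e)) - l * (b - a))"
  by (simp add: algebra_simps power2_eq_square)

lemma id2: "fls_const (r n) * (U N p g P n + U N p g P (n - 1)) * (U N p g P n + U N p g P (Suc n))
           = lam * ((U N p g P n)\<^sup>2 - 1)"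
proof (induction n)
  case 0
  have "U N p g P 0 = 1" by (simp add: U_def Ufps_def)
  thus ?case by (simp add: r0)
next
  case (Suc m)
  let ?U = "U N p g P"
  let ?c = "\<lambda>k. fls_const (r k)"
  have key: "?c (Suc m) * (?U (Suc m) + ?U m) * (?U (Suc m) + ?U (Suc (Suc m))) - lam * ((?U (Suc m))\<^sup>2 - 1)
     = (?c m * (?U m + ?U (m - 1)) * (?U m + ?U (Suc m)) - lam * ((?U m)\<^sup>2 - 1))
       + (?U m + ?U (Suc m)) * ((?c (Suc m) * (?U (Suc (Suc m)) + ?U (Suc m)) - ?c m * (?U m + ?U (m - 1)))
           - lam * (?U (Suc m) - ?U m))"
    by (rule ring_key)
  show ?case using key Suc.IH id1[of m] by simp
qed

end

theorem theorem1:
  fixes p :: nat and g :: "nat \<Rightarrow> real" and N :: real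
    and P :: "nat \<Rightarrow> real poly" and r :: "nat \<Rightarrow> real" and n :: nat
  assumes "p \<ge> 1" and "g p > 0" and "N > 0"
    and monic: "\<And>k. degree (P k) = k \<and> lead_coeff (P k) = 1"
    and orth: "\<And>k l. k \<noteq> l \<Longrightarrow>
        (\<integral>x. poly (P k) x * poly (P l) x * wt N p g x \<partial>lborel) = 0"
    and hpos: "\<And>k. hnorm N p g P k > 0"
    and rec: "\<And>m. [:0, 1:] * P m = P (Suc m) + smult (r m) (if m = 0 then 0 else P (m - 1))"
    and r0: "r 0 = 0"
    and "n \<ge> 1"
  shows "lam * (U N p g P (Suc n) - U N p g P n)
           = fls_const (r (Suc n)) * (U N p g P (n + 2) + U N p g P (Suc n))
             - fls_const (r n) * (U N p g P n + U N p g P (n - 1))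
       \<and> fls_const (r n) * (U N p g P n + U N p g P (n - 1)) * (U N p g P n + U N p g P (Suc n))
           = lam * ((U N p g P n)\<^sup>2 - 1)"
proof -
  interpret ops N p g P r by (rule ops.intro[OF monic orth hpos rec r0])
  show ?thesis using id1[of n] id2[of n] by simp
qed

end
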